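(* For a parameter vector $(a_1,a_2,b_0,b_1,b_2,s_1,s_2)$ with $h_k=a_1q^k+a_2q^{-k}$ pairwise distinct (over $k\geq -1$), let $(\{\alpha_n\}_{n\geq1},\{\beta_n\}_{n\geq0})$ be the recurrence coefficient sequences defined from it. Let $P=(a_1,a_2,b_0,0,0,s_1,s_2)$. (i) If $a_2\neq 0$, then $P$ and $P_1=(a_1,a_2,b_0,b_1,0,\hat s_1,\hat s_2)$, where $b_1=-\frac{b_0a_2+s_2}{a_2}$, $\hat s_1=\frac{qs_1-b_0a_2-s_2}{q}$, $\hat s_2=-b_0a_2$, yield the same pair of sequences $(\alpha_n,\beta_n)$. (ii) If $a_1\neq 0$, then $P$ and $P_2=(a_1,a_2,b_0,0,b_2,\tilde s_1,\tilde s_2)$, where $b_2=-\frac{b_0a_1+s_1}{a_1}$, $\tilde s_1=-b_0a_1$, $\tilde s_2=s_2-qa_1b_0-qs_1$, yield the same pair of sequences $(\alpha_n,\beta_n)$.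
   Context: Fix $q\in\mathbb{C}$ with $q\neq 0$ and $|q|\neq 1$. Given a parameter vector $(a_1,a_2,b_0,b_1,b_2,s_1,s_2)\in\mathbb{C}^7$, put $s_0=-s_1-s_2$ and define for integers $k$: $x_k=b_0+b_1q^k+b_2q^{-k}$, $h_k=a_1q^k+a_2q^{-k}$, $d_k=s_0+s_1q^k+s_2q^{-k}$, $g_0=0$, $g_k=x_{k-1}(h_k-h_0)+d_k$ for $k\geq1$. The recurrence coefficients are $$\alpha_n=\frac{g_n}{h_{n-1}-h_n}\left(\frac{g_{n-1}}{h_{n-2}-h_n}-\frac{g_n}{h_{n-1}-h_n}+\frac{g_{n+1}}{h_{n-1}-h_{n+1}}+x_n-x_{n-1}\right),\ n\geq1,\qquad \beta_n=x_n+\frac{g_{n+1}}{h_n-h_{n+1}}-\frac{g_n}{h_{n-1}-h_n},\ n\geq0,$$ where any term containing the factor $g_0=0$ is taken to be $0$. (These are the coefficients of the three-term recurrence $u_{n+1}=(t-\beta_n)u_n-\alpha_nu_{n-1}$ satisfied by the monic polynomials $u_n$ determined by the parameters.) *)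

theory Defs
  imports Complex_Main
begin

type_synonym param = "complex \<times> complex \<times> complex \<times> complex \<times> complex \<times> complex \<times> complex"

definition xk :: "complex \<Rightarrow> param \<Rightarrow> int \<Rightarrow> complex" where
  "xk q P k = (case P of (a1, a2, b0, b1, b2, s1, s2) \<Rightarrow> b0 + b1 * q powi k + b2 * q powi (-k))"

definition hk :: "complex \<Rightarrow> param \<Rightarrow> int \<Rightarrow> complex" where
  "hk q P k = (case P of (a1, a2, b0, b1, b2, s1, s2) \<Rightarrow> a1 * q powi k + a2 * q powi (-k))"

definition dk :: "complex \<Rightarrow> param \<Rightarrow> int \<Rightarrow> complex" where
  "dk q P k = (case P of (a1, a2, b0, b1, b2, s1, s2) \<Rightarrow>
      (- s1 - s2) + s1 * q powi k + s2 * q powi (-k))"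

definition gk :: "complex \<Rightarrow> param \<Rightarrow> nat \<Rightarrow> complex" where
  "gk q P k = (if k = 0 then 0
      else xk q P (int k - 1) * (hk q P (int k) - hk q P 0) + dk q P (int k))"

text \<open>alpha_n for n >= 1. For n = 1 the first inner term contains g_0 = 0 and is
  0 (division by anything of 0 is 0 in Isabelle).\<close>
definition alpha :: "complex \<Rightarrow> param \<Rightarrow> nat \<Rightarrow> complex" where
  "alpha q P n =
     gk q P n / (hk q P (int n - 1) - hk q P (int n)) *
     (gk q P (n - 1) / (hk q P (int n - 2) - hk q P (int n))
      - gk q P n / (hk q P (int n - 1) - hk q P (int n))
      + gk q P (n + 1) / (hk q P (int n - 1) - hk q P (int n + 1))
      + xk q P (int n) - xk q P (int n - 1))"

text \<open>beta_n for n >= 0. For n = 0 the last term contains g_0 = 0 and is 0.\<close>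
definition beta :: "complex \<Rightarrow> param \<Rightarrow> nat \<Rightarrow> complex" where
  "beta q P n =
     xk q P (int n) + gk q P (n + 1) / (hk q P (int n) - hk q P (int n + 1))
     - gk q P n / (hk q P (int n - 1) - hk q P (int n))"

definition same_coeffs :: "complex \<Rightarrow> param \<Rightarrow> param \<Rightarrow> bool" where
  "same_coeffs q P Q \<longleftrightarrow> (\<forall>n\<ge>1. alpha q P n = alpha q Q n) \<and> (\<forall>n. beta q P n = beta q Q n)"

end

theory Submission imports Defs begin

definition "xe b0 b1 b2 z r c c' = b0 + b1*z*c + b2*r*(c'::complex)"
definition "he a1 a2 z r c c' = a1*z*c + a2*r*(c'::complex)"
definition "de s1 s2 z r c c' = -s1-s2 + s1*z*c + s2*r*(c'::complex)"

lemma pw: "(q::complex) \<noteq> 0 \<Longrightarrow> q powi (k + j) = q powi k * q powi j"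
  by (simp add: power_int_add)
lemma pwm: "(q::complex) \<noteq> 0 \<Longrightarrow> q powi (-k - j) = q powi (-k) * q powi (-j)"
  by (metis diff_conv_add_uminus power_int_add)

lemma xk_sh: "q \<noteq> 0 \<Longrightarrow> xk q (a1,a2,b0,b1,b2,s1,s2) (k + j) = xe b0 b1 b2 (q powi k) (q powi (-k)) (q powi j) (q powi (-j))"
  unfolding xk_def xe_def by (simp add: pw pwm)
lemma hk_sh: "q \<noteq> 0 \<Longrightarrow> hk q (a1,a2,b0,b1,b2,s1,s2) (k + j) = he a1 a2 (q powi k) (q powi (-k)) (q powi j) (q powi (-j))"
  unfolding hk_def he_def by (simp add: pw pwm)
lemma dk_sh: "q \<noteq> 0 \<Longrightarrow> dk q (a1,a2,b0,b1,b2,s1,s2) (k + j) = de s1 s2 (q powi k) (q powi (-k)) (q powi j) (q powi (-j))"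
  unfolding dk_def de_def by (simp add: pw pwm)

lemma gk_all: "gk q P k = xk q P (int k - 1) * (hk q P (int k) - hk q P 0) + dk q P (int k)"
  by (cases P) (auto simp: gk_def dk_def)

definition "AL a1 a2 b0 b1 b2 s1 s2 q u z r =
 (let X = (\<lambda>c c'. xe b0 b1 b2 z r c c'); Hh = (\<lambda>c c'. he a1 a2 z r c c');
      D = (\<lambda>c c'. de s1 s2 z r c c'); H = a1+a2;
      B = X (u^2) (q^2) * (Hh u q - H) + D u q;
      A = X u q * (Hh 1 1 - H) + D 1 1;
      C = X 1 1 * (Hh q u - H) + D q u
  in A/(Hh u q - Hh 1 1) * (B/(Hh (u^2) (q^2) - Hh 1 1) - A/(Hh u q - Hh 1 1)
      + C/(Hh u q - Hh q u) + X 1 1 - X u q))"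

definition "BE a1 a2 b0 b1 b2 s1 s2 q u z r =
 (let X = (\<lambda>c c'. xe b0 b1 b2 z r c c'); Hh = (\<lambda>c c'. he a1 a2 z r c c');
      D = (\<lambda>c c'. de s1 s2 z r c c'); H = a1+a2;
      A = X u q * (Hh 1 1 - H) + D 1 1;
      C = X 1 1 * (Hh q u - H) + D q u
  in X 1 1 + C/(Hh 1 1 - Hh q u) - A/(Hh u q - Hh 1 1))"

context
  fixes q a1 a2 b0 b1 b2 s1 s2 :: complex and n :: nat
  assumes q: "q \<noteq> 0"
begin

private abbreviation "P \<equiv> (a1,a2,b0,b1,b2,s1,s2)"
private abbreviation "z \<equiv> q powi (int n)"
private abbreviation "r \<equiv> q powi (- int n)"
private abbreviation "u \<equiv> inverse q"

lemma vals:
  "xk q P (int n - 2) = xe b0 b1 b2 z r (u^2) (q^2)"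
  "xk q P (int n - 1) = xe b0 b1 b2 z r u q"
  "xk q P (int n) = xe b0 b1 b2 z r 1 1"
  "hk q P (int n - 2) = he a1 a2 z r (u^2) (q^2)"
  "hk q P (int n - 1) = he a1 a2 z r u q"
  "hk q P (int n) = he a1 a2 z r 1 1"
  "hk q P (int n + 1) = he a1 a2 z r q u"
  "dk q P (int n - 1) = de s1 s2 z r u q"
  "dk q P (int n) = de s1 s2 z r 1 1"
  "dk q P (int n + 1) = de s1 s2 z r q u"
  using xk_sh[OF q, of a1 a2 b0 b1 b2 s1 s2 "int n" "-2"]
    xk_sh[OF q, of a1 a2 b0 b1 b2 s1 s2 "int n" "-1"]
    xk_sh[OF q, of a1 a2 b0 b1 b2 s1 s2 "int n" "0"]
    hk_sh[OF q, of a1 a2 b0 b1 b2 s1 s2 "int n" "-2"]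
    hk_sh[OF q, of a1 a2 b0 b1 b2 s1 s2 "int n" "-1"]
    hk_sh[OF q, of a1 a2 b0 b1 b2 s1 s2 "int n" "0"]
    hk_sh[OF q, of a1 a2 b0 b1 b2 s1 s2 "int n" "1"]
    dk_sh[OF q, of a1 a2 b0 b1 b2 s1 s2 "int n" "-1"]
    dk_sh[OF q, of a1 a2 b0 b1 b2 s1 s2 "int n" "0"]
    dk_sh[OF q, of a1 a2 b0 b1 b2 s1 s2 "int n" "1"]
  by (simp_all add: power_int_minus power_inverse)

lemma hk0: "hk q P 0 = a1 + a2" by (simp add: hk_def)

lemma alpha_eq: "n \<ge> 1 \<Longrightarrow> alpha q P n = AL a1 a2 b0 b1 b2 s1 s2 q u z r"
proof -
  assume n: "n \<ge> 1"
  have i1: "int (n - 1) = int n - 1" using n by simp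
  have "gk q P (n-1) = xk q P (int n - 2) * (hk q P (int n - 1) - hk q P 0) + dk q P (int n - 1)"
    unfolding gk_all i1 by (simp add: algebra_simps)
  moreover have "gk q P (n+1) = xk q P (int n) * (hk q P (int n + 1) - hk q P 0) + dk q P (int n + 1)"
    unfolding gk_all by (simp add: add.commute)
  moreover have "gk q P n = xk q P (int n - 1) * (hk q P (int n) - hk q P 0) + dk q P (int n)"
    unfolding gk_all by simp
  ultimately show ?thesis unfolding alpha_def AL_def Let_def vals hk0 by simp
qed

lemma beta_eq: "beta q P n = BE a1 a2 b0 b1 b2 s1 s2 q u z r"
proof -
  have "gk q P (n+1) = xk q P (int n) * (hk q P (int n + 1) - hk q P 0) + dk q P (int n + 1)"
    unfolding gk_all by (simp add: add.commute)
  moreover have "gk q P n = xk q P (int n - 1) * (hk q P (int n) - hk q P 0) + dk q P (int n)"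
    unfolding gk_all by simp
  ultimately show ?thesis unfolding beta_def BE_def Let_def vals hk0 by simp
qed

end


lemma frac_a:
  fixes A B C X1 X0 A' B' C' X1' X0' D1 D2 D3 :: complex
  assumes "D1 \<noteq> 0" "D2 \<noteq> 0" "D3 \<noteq> 0"
    and "A*(B*D1*D3 - A*D2*D3 + C*D1*D2 + (X1-X0)*D1*D2*D3) = A'*(B'*D1*D3 - A'*D2*D3 + C'*D1*D2 + (X1'-X0')*D1*D2*D3)"
  shows "A/D1*(B/D2 - A/D1 + C/D3 + X1 - X0) = A'/D1*(B'/D2 - A'/D1 + C'/D3 + X1' - X0')"
proof -
  have "A/D1*(B/D2 - A/D1 + C/D3 + X1 - X0) = A*(B*D1*D3 - A*D2*D3 + C*D1*D2 + (X1-X0)*D1*D2*D3) / (D1*D1*D2*D3)"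
    using assms(1-3) by (simp add: field_simps)
  moreover have "A'/D1*(B'/D2 - A'/D1 + C'/D3 + X1' - X0') = A'*(B'*D1*D3 - A'*D2*D3 + C'*D1*D2 + (X1'-X0')*D1*D2*D3) / (D1*D1*D2*D3)"
    using assms(1-3) by (simp add: field_simps)
  ultimately show ?thesis using assms(4) by simp
qed

lemma frac_b:
  fixes A C X A' C' X' D1 D4 :: complex
  assumes "D1 \<noteq> 0" "D4 \<noteq> 0" and "(X - X')*D4*D1 + (C - C')*D1 - (A - A')*D4 = 0"
  shows "X + C/D4 - A/D1 = X' + C'/D4 - A'/D1"
proof -
  have "X + C/D4 - A/D1 - (X' + C'/D4 - A'/D1) = ((X - X')*D4*D1 + (C - C')*D1 - (A - A')*D4)/(D4*D1)"
    using assms(1,2) by (simp add: field_simps)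
  then show ?thesis using assms(3) by simp
qed

lemma core1a:
  fixes q u z r a1 a2 b0 b1 s1 s2 t1 t2 :: complex
  assumes qu: "q*u = 1" and zr: "z*r = 1" and s2: "s2 = -a2*(b0+b1)" and t1: "t1 = s1 + a2*b1*u"
    and t2: "t2 = -b0*a2"
    and D1: "he a1 a2 z r u q - he a1 a2 z r 1 1 \<noteq> 0"
    and D2: "he a1 a2 z r (u^2) (q^2) - he a1 a2 z r 1 1 \<noteq> 0"
    and D3: "he a1 a2 z r u q - he a1 a2 z r q u \<noteq> 0"
  shows "AL a1 a2 b0 0 0 s1 s2 q u z r = AL a1 a2 b0 b1 0 t1 t2 q u z r"
  unfolding AL_def Let_def
  apply (rule frac_a[OF D1 D2 D3])
  using qu zr unfolding s2 t1 t2 xe_def he_def de_def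
  by algebra

lemma core1b:
  fixes q u z r a1 a2 b0 b1 s1 s2 t1 t2 :: complex
  assumes qu: "q*u = 1" and zr: "z*r = 1" and s2: "s2 = -a2*(b0+b1)" and t1: "t1 = s1 + a2*b1*u"
    and t2: "t2 = -b0*a2"
    and D1: "he a1 a2 z r u q - he a1 a2 z r 1 1 \<noteq> 0"
    and D4: "he a1 a2 z r 1 1 - he a1 a2 z r q u \<noteq> 0"
  shows "BE a1 a2 b0 0 0 s1 s2 q u z r = BE a1 a2 b0 b1 0 t1 t2 q u z r"
  unfolding BE_def Let_def
  apply (rule frac_b[OF D1 D4])
  using qu zr unfolding s2 t1 t2 xe_def he_def de_def
  by algebra

lemma core2a:
  fixes q u z r a1 a2 b0 b2 s1 s2 t1 t2 :: complex
  assumes qu: "q*u = 1" and zr: "z*r = 1" and s1: "s1 = -a1*(b0+b2)" and t1: "t1 = -b0*a1"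
    and t2: "t2 = s2 + q*a1*b2"
    and D1: "he a1 a2 z r u q - he a1 a2 z r 1 1 \<noteq> 0"
    and D2: "he a1 a2 z r (u^2) (q^2) - he a1 a2 z r 1 1 \<noteq> 0"
    and D3: "he a1 a2 z r u q - he a1 a2 z r q u \<noteq> 0"
  shows "AL a1 a2 b0 0 0 s1 s2 q u z r = AL a1 a2 b0 0 b2 t1 t2 q u z r"
  unfolding AL_def Let_def
  apply (rule frac_a[OF D1 D2 D3])
  using qu zr unfolding s1 t1 t2 xe_def he_def de_def
  by algebra

lemma core2b:
  fixes q u z r a1 a2 b0 b2 s1 s2 t1 t2 :: complex
  assumes qu: "q*u = 1" and zr: "z*r = 1" and s1: "s1 = -a1*(b0+b2)" and t1: "t1 = -b0*a1"
    and t2: "t2 = s2 + q*a1*b2"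
    and D1: "he a1 a2 z r u q - he a1 a2 z r 1 1 \<noteq> 0"
    and D4: "he a1 a2 z r 1 1 - he a1 a2 z r q u \<noteq> 0"
  shows "BE a1 a2 b0 0 0 s1 s2 q u z r = BE a1 a2 b0 0 b2 t1 t2 q u z r"
  unfolding BE_def Let_def
  apply (rule frac_b[OF D1 D4])
  using qu zr unfolding s1 t1 t2 xe_def he_def de_def
  by algebra


lemma Dfacts:
  fixes q a1 a2 :: complex and n :: nat
  assumes q: "q \<noteq> 0"
    and hd: "\<forall>j k :: int. j \<ge> -1 \<longrightarrow> k \<ge> -1 \<longrightarrow> j \<noteq> k \<longrightarrow>
                  a1 * q powi j + a2 * q powi (-j) \<noteq> a1 * q powi k + a2 * q powi (-k)"
  shows "he a1 a2 (q powi int n) (q powi (- int n)) (inverse q) q - he a1 a2 (q powi int n) (q powi (- int n)) 1 1 \<noteq> 0"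
    and "n \<ge> 1 \<Longrightarrow> he a1 a2 (q powi int n) (q powi (- int n)) ((inverse q)^2) (q^2) - he a1 a2 (q powi int n) (q powi (- int n)) 1 1 \<noteq> 0"
    and "he a1 a2 (q powi int n) (q powi (- int n)) (inverse q) q - he a1 a2 (q powi int n) (q powi (- int n)) q (inverse q) \<noteq> 0"
    and "he a1 a2 (q powi int n) (q powi (- int n)) 1 1 - he a1 a2 (q powi int n) (q powi (- int n)) q (inverse q) \<noteq> 0"
proof -
  have hne: "hk q (a1,a2,0,0,0,0,0) j \<noteq> hk q (a1,a2,0,0,0,0,0) k" if "j \<ge> -1" "k \<ge> -1" "j \<noteq> k" for j k
    using hd that by (simp add: hk_def)
  show "he a1 a2 (q powi int n) (q powi (- int n)) (inverse q) q - he a1 a2 (q powi int n) (q powi (- int n)) 1 1 \<noteq> 0"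
    using hne[of "int n - 1" "int n"] vals[OF q] by simp
  show "n \<ge> 1 \<Longrightarrow> he a1 a2 (q powi int n) (q powi (- int n)) ((inverse q)^2) (q^2) - he a1 a2 (q powi int n) (q powi (- int n)) 1 1 \<noteq> 0"
    using hne[of "int n - 2" "int n"] vals[OF q] by simp
  show "he a1 a2 (q powi int n) (q powi (- int n)) (inverse q) q - he a1 a2 (q powi int n) (q powi (- int n)) q (inverse q) \<noteq> 0"
    using hne[of "int n - 1" "int n + 1"] vals[OF q] by simp
  show "he a1 a2 (q powi int n) (q powi (- int n)) 1 1 - he a1 a2 (q powi int n) (q powi (- int n)) q (inverse q) \<noteq> 0"
    using hne[of "int n" "int n + 1"] vals[OF q] by simp
qed

theorem mainTheorem9:
  fixes q a1 a2 b0 s1 s2 :: complex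
  assumes hq0: "q \<noteq> 0" and hq1: "norm q \<noteq> 1"
    and hdist: "\<And>j k :: int. j \<ge> -1 \<Longrightarrow> k \<ge> -1 \<Longrightarrow> j \<noteq> k \<Longrightarrow>
                  a1 * q powi j + a2 * q powi (-j) \<noteq> a1 * q powi k + a2 * q powi (-k)"
  shows "(a2 \<noteq> 0 \<longrightarrow>
            same_coeffs q (a1, a2, b0, 0, 0, s1, s2)
              (a1, a2, b0, - (b0 * a2 + s2) / a2, 0, (q * s1 - b0 * a2 - s2) / q, - b0 * a2))
       \<and> (a1 \<noteq> 0 \<longrightarrow>
            same_coeffs q (a1, a2, b0, 0, 0, s1, s2)
              (a1, a2, b0, 0, - (b0 * a1 + s1) / a1, - b0 * a1, s2 - q * a1 * b0 - q * s1))"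
proof (intro conjI impI)
  have qu: "q * inverse q = 1" using hq0 by simp
  have zr: "\<And>n::nat. q powi int n * q powi (- int n) = 1" using hq0 by (simp add: power_int_minus)
  have hd: "\<forall>j k :: int. j \<ge> -1 \<longrightarrow> k \<ge> -1 \<longrightarrow> j \<noteq> k \<longrightarrow>
                  a1 * q powi j + a2 * q powi (-j) \<noteq> a1 * q powi k + a2 * q powi (-k)"
    using hdist by blast
  note D = Dfacts[OF hq0 hd]
  {
    assume a2: "a2 \<noteq> 0"
    have s2e: "s2 = -a2*(b0 + (- (b0 * a2 + s2) / a2))" using a2 by (simp add: field_simps)
    have t1e: "(q * s1 - b0 * a2 - s2) / q = s1 + a2*(- (b0 * a2 + s2) / a2)*inverse q"
      using a2 hq0 by (simp add: field_simps)
    show "same_coeffs q (a1, a2, b0, 0, 0, s1, s2)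
              (a1, a2, b0, - (b0 * a2 + s2) / a2, 0, (q * s1 - b0 * a2 - s2) / q, - b0 * a2)"
      unfolding same_coeffs_def
    proof (intro conjI allI impI)
      fix n :: nat assume n: "n \<ge> 1"
      show "alpha q (a1, a2, b0, 0, 0, s1, s2) n = alpha q (a1, a2, b0, - (b0 * a2 + s2) / a2, 0, (q * s1 - b0 * a2 - s2) / q, - b0 * a2) n"
        unfolding alpha_eq[OF hq0 n]
        by (rule core1a[OF qu zr s2e t1e refl D(1) D(2)[OF n] D(3)])
    next
      fix n :: nat
      show "beta q (a1, a2, b0, 0, 0, s1, s2) n = beta q (a1, a2, b0, - (b0 * a2 + s2) / a2, 0, (q * s1 - b0 * a2 - s2) / q, - b0 * a2) n"
        unfolding beta_eq[OF hq0]
        by (rule core1b[OF qu zr s2e t1e refl D(1) D(4)])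
    qed
  }
  {
    assume a1: "a1 \<noteq> 0"
    have s1e: "s1 = -a1*(b0 + (- (b0 * a1 + s1) / a1))" using a1 by (simp add: field_simps)
    have t2e: "s2 - q * a1 * b0 - q * s1 = s2 + q*a1*(- (b0 * a1 + s1) / a1)"
      using a1 by (simp add: field_simps)
    have t1e: "- b0 * a1 = -b0*a1" by simp
    show "same_coeffs q (a1, a2, b0, 0, 0, s1, s2)
              (a1, a2, b0, 0, - (b0 * a1 + s1) / a1, - b0 * a1, s2 - q * a1 * b0 - q * s1)"
      unfolding same_coeffs_def
    proof (intro conjI allI impI)
      fix n :: nat assume n: "n \<ge> 1"
      show "alpha q (a1, a2, b0, 0, 0, s1, s2) n = alpha q (a1, a2, b0, 0, - (b0 * a1 + s1) / a1, - b0 * a1, s2 - q * a1 * b0 - q * s1) n"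
        unfolding alpha_eq[OF hq0 n]
        by (rule core2a[OF qu zr s1e t1e t2e D(1) D(2)[OF n] D(3)])
    next
      fix n :: nat
      show "beta q (a1, a2, b0, 0, 0, s1, s2) n = beta q (a1, a2, b0, 0, - (b0 * a1 + s1) / a1, - b0 * a1, s2 - q * a1 * b0 - q * s1) n"
        unfolding beta_eq[OF hq0]
        by (rule core2b[OF qu zr s1e t1e t2e D(1) D(4)])
    qed
  }
qed

end
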